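(* Let $n \in \mathbb{Z}_{>0}$ and $M \in \mathbb{Z}_{\geq 0}$. If $n=1$, then $\mathrm{pstairPP}(n,M)=\mathrm{QTCPP}(n,M)$. If $n\ge 2$, define for $\pi\in\mathrm{pstairPP}(n,M)$ the array $f(\pi)$ on the staircase cells by $f(\pi)_{i,j}=\frac{\pi_{i,j}+M}{2}$ if $i+j<n+1$, and $f(\pi)_{i,j}=\pi_{i,j}+\frac{M-m_{i,j}}{2}$ if $i+j=n+1$, where $m_{i,j}=\min(\pi_{i-1,j},\pi_{i,j-1})$ if $i,j\neq 1$, $m_{i,j}=\pi_{i-1,j}$ if $j=1$, and $m_{i,j}=\pi_{i,j-1}$ if $i=1$. Then $f$ is a well-defined bijection $\mathrm{pstairPP}(n,M)\to\mathrm{QTCPP}(n,M)$, whose inverse is given by $f^{-1}(\pi')_{i,j}=2\pi'_{i,j}-M$ if $i+j<n+1$ and $f^{-1}(\pi')_{i,j}=\pi'_{i,j}-M+m'_{i,j}$ if $i+j=n+1$, where $m'_{i,j}$ is defined from $\pi'$ in the same way as $m_{i,j}$ from $\pi$.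
   Context: A staircase plane partition of size $n$ with upper bound $M$ is an array $\pi=(\pi_{i,j})$ of nonnegative integers indexed by cells $(i,j)$, $i,j\ge1$, $i+j\le n+1$, weakly decreasing along rows and columns, with $\pi_{1,1}\le M$; their set is $\mathrm{stairPP}(n,M)$. $\mathrm{pstairPP}(n,M)=\{\pi\in\mathrm{stairPP}(n,M)\mid \pi_{i,j}\equiv M \pmod 2 \text{ whenever } i+j<n+1\}$. $\mathrm{QTCPP}(n,M)$ is the set of $\pi\in\mathrm{stairPP}(n,M)$ such that (1) $\pi_{i,j}\ge M-\pi_{i-1,j}$ whenever $i+j=n+1$ and $2\le i\le n$, and (2) $\pi_{i,j}\ge M-\pi_{i,j-1}$ whenever $i+j=n+1$ and $2\le j\le n$. (This set is in natural bijection with quasi-transpose complementary plane partitions: $n\times n$ plane partitions with $\pi_{i,j}=M-\pi_{n+1-j,n+1-i}$ for $i+j\ne n+1$.) *)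

theory Defs
  imports Main
begin

text \<open>An array is a function nat \<Rightarrow> nat \<Rightarrow> int indexed by cells (i,j), i,j \<ge> 1.
  Staircase cells of size n: i \<ge> 1, j \<ge> 1, i + j \<le> n + 1.
  Arrays are required to vanish outside the staircase, so that each array
  corresponds to exactly one staircase plane partition.\<close>

definition cell :: "nat \<Rightarrow> nat \<Rightarrow> nat \<Rightarrow> bool" where
  "cell n i j \<longleftrightarrow> 1 \<le> i \<and> 1 \<le> j \<and> i + j \<le> n + 1"

definition stairPP :: "nat \<Rightarrow> int \<Rightarrow> (nat \<Rightarrow> nat \<Rightarrow> int) set" where
  "stairPP n M = {\<pi>.
     (\<forall>i j. \<not> cell n i j \<longrightarrow> \<pi> i j = 0) \<and>
     (\<forall>i j. cell n i j \<longrightarrow> 0 \<le> \<pi> i j) \<and>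
     (\<forall>i j. cell n i j \<and> cell n i (j+1) \<longrightarrow> \<pi> i (j+1) \<le> \<pi> i j) \<and>
     (\<forall>i j. cell n i j \<and> cell n (i+1) j \<longrightarrow> \<pi> (i+1) j \<le> \<pi> i j) \<and>
     \<pi> 1 1 \<le> M}"

definition pstairPP :: "nat \<Rightarrow> int \<Rightarrow> (nat \<Rightarrow> nat \<Rightarrow> int) set" where
  "pstairPP n M = {\<pi> \<in> stairPP n M.
     \<forall>i j. cell n i j \<and> i + j < n + 1 \<longrightarrow> \<pi> i j mod 2 = M mod 2}"

definition QTCPP :: "nat \<Rightarrow> int \<Rightarrow> (nat \<Rightarrow> nat \<Rightarrow> int) set" where
  "QTCPP n M = {\<pi> \<in> stairPP n M.
     (\<forall>i j. i + j = n + 1 \<and> 2 \<le> i \<and> i \<le> n \<and> 1 \<le> j \<longrightarrow> \<pi> i j \<ge> M - \<pi> (i-1) j) \<and>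
     (\<forall>i j. i + j = n + 1 \<and> 2 \<le> j \<and> j \<le> n \<and> 1 \<le> i \<longrightarrow> \<pi> i j \<ge> M - \<pi> i (j-1))}"

definition mval :: "(nat \<Rightarrow> nat \<Rightarrow> int) \<Rightarrow> nat \<Rightarrow> nat \<Rightarrow> int" where
  "mval \<pi> i j =
     (if i = 1 then \<pi> i (j-1)
      else if j = 1 then \<pi> (i-1) j
      else min (\<pi> (i-1) j) (\<pi> i (j-1)))"

definition fmap :: "nat \<Rightarrow> int \<Rightarrow> (nat \<Rightarrow> nat \<Rightarrow> int) \<Rightarrow> (nat \<Rightarrow> nat \<Rightarrow> int)" where
  "fmap n M \<pi> = (\<lambda>i j.
     if \<not> cell n i j then 0
     else if i + j < n + 1 then (\<pi> i j + M) div 2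
     else \<pi> i j + (M - mval \<pi> i j) div 2)"

definition finv :: "nat \<Rightarrow> int \<Rightarrow> (nat \<Rightarrow> nat \<Rightarrow> int) \<Rightarrow> (nat \<Rightarrow> nat \<Rightarrow> int)" where
  "finv n M \<pi>' = (\<lambda>i j.
     if \<not> cell n i j then 0
     else if i + j < n + 1 then 2 * \<pi>' i j - M
     else \<pi>' i j - M + mval \<pi>' i j)"

end

theory Submission
  imports Defs
begin

lemma row_mono:
  assumes P: "\<pi> \<in> stairPP n M" and "j \<le> j'" "cell n i j'" "1 \<le> j"
  shows "\<pi> i j' \<le> \<pi> i j"
  using assms(2,3)
proof (induction j' rule: dec_induct)
  case base then show ?case by simp
next
  case (step k)
  have c: "cell n i k" using step.prems step.hyps \<open>1 \<le> j\<close> by (auto simp: cell_def)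
  have "\<pi> i (k+1) \<le> \<pi> i k" using P c step.prems unfolding stairPP_def by auto
  then show ?case using step.IH c by simp
qed

lemma col_mono:
  assumes P: "\<pi> \<in> stairPP n M" and "i \<le> i'" "cell n i' j" "1 \<le> i"
  shows "\<pi> i' j \<le> \<pi> i j"
  using assms(2,3)
proof (induction i' rule: dec_induct)
  case base then show ?case by simp
next
  case (step k)
  have c: "cell n k j" using step.prems step.hyps \<open>1 \<le> i\<close> by (auto simp: cell_def)
  have "\<pi> (k+1) j \<le> \<pi> k j" using P c step.prems unfolding stairPP_def by auto
  then show ?case using step.IH c by simp
qed

lemma mval_map:
  assumes "2 \<le> n" "cell n i j" "i + j = n + 1" "mono g"
    "\<And>a b. cell n a b \<Longrightarrow> a + b < n + 1 \<Longrightarrow> \<sigma> a b = g (\<pi> a b)"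
  shows "mval \<sigma> i j = g (mval \<pi> i j)"
proof (cases "i = 1")
  case True
  then have "cell n 1 (j-1)" "1 + (j-1) < n+1" using assms(1-3) by (auto simp: cell_def)
  then show ?thesis using True assms(5) by (simp add: mval_def)
next
  case F: False
  show ?thesis
  proof (cases "j = 1")
    case True
    then have "cell n (i-1) 1" "(i-1) + 1 < n+1" using assms(1-3) F by (auto simp: cell_def)
    then show ?thesis using True F assms(5) by (simp add: mval_def)
  next
    case False
    then have "cell n (i-1) j" "(i-1) + j < n+1" "cell n i (j-1)" "i + (j-1) < n+1"
      using assms(1-3) F by (auto simp: cell_def)
    then show ?thesis using False F assms(4,5) by (simp add: mval_def min_of_mono)
  qed
qed

lemma mval_nb:
  assumes "2 \<le> n" "cell n i j" "i + j = n + 1"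
  shows "(2 \<le> i \<and> cell n (i-1) j \<and> (i-1) + j < n+1 \<and> mval \<pi> i j = \<pi> (i-1) j) \<or>
         (2 \<le> j \<and> cell n i (j-1) \<and> i + (j-1) < n+1 \<and> mval \<pi> i j = \<pi> i (j-1))"
  using assms unfolding mval_def cell_def min_def by auto

lemma mval_le1:
  assumes "2 \<le> n" "cell n i j" "i + j = n + 1" "2 \<le> i"
  shows "cell n (i-1) j \<and> (i-1) + j < n+1 \<and> mval \<pi> i j \<le> \<pi> (i-1) j"
  using assms unfolding mval_def cell_def by auto

lemma mval_le2:
  assumes "2 \<le> n" "cell n i j" "i + j = n + 1" "2 \<le> j"
  shows "cell n i (j-1) \<and> i + (j-1) < n+1 \<and> mval \<pi> i j \<le> \<pi> i (j-1)"
  using assms unfolding mval_def cell_def by auto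

lemma ed: fixes x :: int assumes "even x" shows "x = 2 * (x div 2)" using assms by simp
lemma A1: fixes p' m p M :: int
  shows "p' \<le> m \<Longrightarrow> m \<le> p \<Longrightarrow> even (M - m) \<Longrightarrow> even (p + M) \<Longrightarrow> p' + (M-m) div 2 \<le> (p+M) div 2"
  by (drule ed)+ linarith
lemma A2: fixes p M :: int
  shows "p \<le> M \<Longrightarrow> even (p + M) \<Longrightarrow> (p+M) div 2 \<le> M"
  by (drule ed)+ linarith
lemma A3: fixes q m p M :: int
  shows "m \<le> p \<Longrightarrow> 0 \<le> q \<Longrightarrow> even (M - m) \<Longrightarrow> even (p + M) \<Longrightarrow> M - (p+M) div 2 \<le> q + (M-m) div 2"
  by (drule ed)+ linarith
lemma A4: fixes p M :: int shows "even (p + M) \<Longrightarrow> 2 * ((p + M) div 2) - M = p"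
  by (drule ed)+ linarith
lemma A5: fixes p m M :: int shows "even (M - m) \<Longrightarrow> even (m + M) \<Longrightarrow> p + (M - m) div 2 - M + (m + M) div 2 = p"
  by (drule ed)+ linarith
lemma A6: fixes x M :: int shows "(2 * x - M + M) div 2 = x" by simp
lemma A7: fixes x m M :: int shows "x - M + m + (M - (2 * m - M)) div 2 = x"
proof - have "M - (2 * m - M) = 2 * (M - m)" by simp
  then show ?thesis by simp qed
lemma A8: fixes x M :: int shows "(2 * x - M) mod 2 = M mod 2" by presburger
lemma A9: fixes x M :: int shows "x mod 2 = M mod 2 \<Longrightarrow> even (x + M)" by presburger
lemma A10: fixes x M :: int shows "x mod 2 = M mod 2 \<Longrightarrow> even (M - x)" by presburger
lemma stairD:
  assumes "\<pi> \<in> stairPP n M"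
  shows "\<not> cell n i j \<Longrightarrow> \<pi> i j = 0" "cell n i j \<Longrightarrow> 0 \<le> \<pi> i j"
    "cell n i j \<Longrightarrow> cell n i (j+1) \<Longrightarrow> \<pi> i (j+1) \<le> \<pi> i j"
    "cell n i j \<Longrightarrow> cell n (i+1) j \<Longrightarrow> \<pi> (i+1) j \<le> \<pi> i j"
    "\<pi> 1 1 \<le> M"
  using assms unfolding stairPP_def mem_Collect_eq by blast+

lemma pstairD:
  assumes "\<pi> \<in> pstairPP n M"
  shows "\<pi> \<in> stairPP n M" "cell n i j \<Longrightarrow> i + j < n + 1 \<Longrightarrow> \<pi> i j mod 2 = M mod 2"
  using assms unfolding pstairPP_def mem_Collect_eq by blast+

lemma le_M:
  assumes P: "\<pi> \<in> stairPP n M" and c: "cell n a b"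
  shows "\<pi> a b \<le> M"
proof -
  have c1: "cell n a 1" "cell n 1 1" using c by (auto simp: cell_def)
  have "\<pi> a b \<le> \<pi> a 1" using row_mono[OF P _ c] c by (auto simp: cell_def)
  also have "\<dots> \<le> \<pi> 1 1" using col_mono[OF P _ c1(1)] c by (auto simp: cell_def)
  also have "\<dots> \<le> M" using P unfolding stairPP_def by auto
  finally show ?thesis .
qed

lemma case_n1: "pstairPP 1 M = QTCPP 1 M"
proof -
  have "pstairPP 1 M = stairPP 1 M" unfolding pstairPP_def by (auto simp: cell_def)
  moreover have "QTCPP 1 M = stairPP 1 M" unfolding QTCPP_def by auto
  ultimately show ?thesis by simp
qed

lemma parity:
  assumes n: "2 \<le> n" and P: "\<pi> \<in> pstairPP n M" and c: "cell n i j"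
  shows "if i + j < n + 1 then even (\<pi> i j + M) else even (M - mval \<pi> i j)"
proof -
  have par: "\<And>a b. cell n a b \<Longrightarrow> a + b < n + 1 \<Longrightarrow> \<pi> a b mod 2 = M mod 2"
    using pstairD(2)[OF P] by blast
  show ?thesis
  proof (cases "i + j < n + 1")
    case True then show ?thesis using A9[OF par[OF c True]] by simp
  next
    case False
    then have b: "i + j = n + 1" using c by (auto simp: cell_def)
    from mval_nb[OF n c b, of \<pi>] have "mval \<pi> i j mod 2 = M mod 2"
    proof
      assume h: "2 \<le> i \<and> cell n (i - 1) j \<and> i - 1 + j < n + 1 \<and> mval \<pi> i j = \<pi> (i - 1) j"
      have "\<pi> (i-1) j mod 2 = M mod 2" using h by (intro par) auto
      then show ?thesis using h by simp
    next
      assume h: "2 \<le> j \<and> cell n i (j - 1) \<and> i + (j - 1) < n + 1 \<and> mval \<pi> i j = \<pi> i (j - 1)"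
      have "\<pi> i (j-1) mod 2 = M mod 2" using h by (intro par) auto
      then show ?thesis using h by simp
    qed
    then have "even (M - mval \<pi> i j)" by (rule A10)
    then show ?thesis using False by simp
  qed
qed

lemma fmap_in:
  assumes n: "2 \<le> n" and M: "0 \<le> M" and P: "\<pi> \<in> pstairPP n M"
  shows "fmap n M \<pi> \<in> QTCPP n M"
proof -
  define \<sigma> where "\<sigma> = fmap n M \<pi>"
  have S: "\<pi> \<in> stairPP n M" using pstairD(1)[OF P] .
  have par: "\<And>a b. cell n a b \<Longrightarrow> a + b < n + 1 \<Longrightarrow> \<pi> a b mod 2 = M mod 2"
    using pstairD(2)[OF P] by blast
  note out = stairD(1)[OF S] and nn = stairD(2)[OF S] and rs = stairD(3)[OF S] and cs = stairD(4)[OF S]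
  have lm: "\<And>a b. cell n a b \<Longrightarrow> \<pi> a b \<le> M" using le_M[OF S] by auto
  have si: "\<And>a b. cell n a b \<Longrightarrow> a + b < n + 1 \<Longrightarrow> \<sigma> a b = (\<pi> a b + M) div 2"
    unfolding \<sigma>_def fmap_def by auto
  have sb: "\<And>a b. cell n a b \<Longrightarrow> a + b = n + 1 \<Longrightarrow> \<sigma> a b = \<pi> a b + (M - mval \<pi> a b) div 2"
    unfolding \<sigma>_def fmap_def by auto
  have so: "\<And>a b. \<not> cell n a b \<Longrightarrow> \<sigma> a b = 0" unfolding \<sigma>_def fmap_def by auto
  have evI: "even (\<pi> a b + M)" if "cell n a b" "a + b < n + 1" for a b
    using parity[OF n P that(1)] that(2) by simp
  have evB: "even (M - mval \<pi> a b)" if "cell n a b" "a + b = n + 1" for a b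
    using parity[OF n P that(1)] that(2) by simp
  have bnd: "\<And>a b. cell n a b \<Longrightarrow> \<not> a + b < n + 1 \<Longrightarrow> a + b = n + 1" by (auto simp: cell_def)
  have mv: "\<And>a b. cell n a b \<Longrightarrow> a + b = n + 1 \<Longrightarrow> \<pi> a b \<le> mval \<pi> a b \<and> mval \<pi> a b \<le> M"
  proof -
    fix a b assume c: "cell n a b" and b: "a + b = n + 1"
    from mval_nb[OF n c b, of \<pi>] show "\<pi> a b \<le> mval \<pi> a b \<and> mval \<pi> a b \<le> M"
    proof
      assume h: "2 \<le> a \<and> cell n (a - 1) b \<and> a - 1 + b < n + 1 \<and> mval \<pi> a b = \<pi> (a - 1) b"
      then have "\<pi> (a-1+1) b \<le> \<pi> (a-1) b" using cs[of "a-1" b] c by simp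
      then show ?thesis using h lm[of "a-1" b] by simp
    next
      assume h: "2 \<le> b \<and> cell n a (b - 1) \<and> a + (b - 1) < n + 1 \<and> mval \<pi> a b = \<pi> a (b - 1)"
      then have "\<pi> a (b-1+1) \<le> \<pi> a (b-1)" using rs[of a "b-1"] c by simp
      then show ?thesis using h lm[of a "b-1"] by simp
    qed
  qed
  have "\<sigma> \<in> QTCPP n M"
    unfolding QTCPP_def stairPP_def mem_Collect_eq
  proof (intro conjI allI impI)
    fix a b assume "\<not> cell n a b" then show "\<sigma> a b = 0" by (rule so)
  next
    fix a b assume c: "cell n a b"
    show "0 \<le> \<sigma> a b"
    proof (cases "a + b < n + 1")
      case True then show ?thesis using si[OF c True] nn[OF c] M by simp
    next
      case False then show ?thesis using sb[OF c bnd[OF c False]] nn[OF c] mv[OF c bnd[OF c False]] by simp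
    qed
  next
    fix a b assume h: "cell n a b \<and> cell n a (b + 1)"
    then have i: "a + b < n + 1" by (auto simp: cell_def)
    have "\<pi> a (b+1) \<le> \<pi> a b" using rs h by auto
    show "\<sigma> a (b + 1) \<le> \<sigma> a b"
    proof (cases "a + (b+1) < n + 1")
      case True then show ?thesis using si[OF conjunct2[OF h] True] si[OF conjunct1[OF h] i] \<open>\<pi> a (b+1) \<le> \<pi> a b\<close>
        by (simp add: zdiv_mono1)
    next
      case False
      then have b: "a + (b+1) = n+1" using h by (auto simp: cell_def)
      have "2 \<le> b + 1" using h by (auto simp: cell_def)
      from mval_le2[OF n conjunct2[OF h] b this, of \<pi>]
      have "mval \<pi> a (b+1) \<le> \<pi> a b" by simp
      then show ?thesis unfolding sb[OF conjunct2[OF h] b] si[OF conjunct1[OF h] i]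
        by (rule A1[OF conjunct1[OF mv[OF conjunct2[OF h] b]] _ evB[OF conjunct2[OF h] b] evI[OF conjunct1[OF h] i]])
    qed
  next
    fix a b assume h: "cell n a b \<and> cell n (a + 1) b"
    then have i: "a + b < n + 1" by (auto simp: cell_def)
    have "\<pi> (a+1) b \<le> \<pi> a b" using cs h by auto
    show "\<sigma> (a + 1) b \<le> \<sigma> a b"
    proof (cases "(a+1) + b < n + 1")
      case True then show ?thesis using si[OF conjunct2[OF h] True] si[OF conjunct1[OF h] i] \<open>\<pi> (a+1) b \<le> \<pi> a b\<close>
        by (simp add: zdiv_mono1)
    next
      case False
      then have b: "(a+1) + b = n+1" using h by (auto simp: cell_def)
      have "2 \<le> a + 1" using h by (auto simp: cell_def)
      from mval_le1[OF n conjunct2[OF h] b this, of \<pi>]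
      have "mval \<pi> (a+1) b \<le> \<pi> a b" by simp
      then show ?thesis unfolding sb[OF conjunct2[OF h] b] si[OF conjunct1[OF h] i]
        by (rule A1[OF conjunct1[OF mv[OF conjunct2[OF h] b]] _ evB[OF conjunct2[OF h] b] evI[OF conjunct1[OF h] i]])
    qed
  next
    have c: "cell n 1 1" "1 + 1 < n + 1" using n by (auto simp: cell_def)
    show "\<sigma> 1 1 \<le> M" unfolding si[OF c] by (rule A2[OF lm[OF c(1)] evI[OF c]])
  next
    fix a b assume h: "a + b = n + 1 \<and> 2 \<le> a \<and> a \<le> n \<and> 1 \<le> b"
    then have c: "cell n a b" by (auto simp: cell_def)
    from mval_le1[OF n c _ _, of \<pi>] h
    have q: "cell n (a - 1) b" "a - 1 + b < n + 1" "mval \<pi> a b \<le> \<pi> (a - 1) b" by auto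
    have hb: "a + b = n + 1" using h by simp
    show "M - \<sigma> (a - 1) b \<le> \<sigma> a b"
      unfolding si[OF q(1,2)] sb[OF c hb] by (rule A3[OF q(3) nn[OF c] evB[OF c hb] evI[OF q(1,2)]])
  next
    fix a b assume h: "a + b = n + 1 \<and> 2 \<le> b \<and> b \<le> n \<and> 1 \<le> a"
    then have c: "cell n a b" by (auto simp: cell_def)
    from mval_le2[OF n c _ _, of \<pi>] h
    have q: "cell n a (b - 1)" "a + (b - 1) < n + 1" "mval \<pi> a b \<le> \<pi> a (b - 1)" by auto
    have hb: "a + b = n + 1" using h by simp
    show "M - \<sigma> a (b - 1) \<le> \<sigma> a b"
      unfolding si[OF q(1,2)] sb[OF c hb] by (rule A3[OF q(3) nn[OF c] evB[OF c hb] evI[OF q(1,2)]])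
  qed
  then show ?thesis unfolding \<sigma>_def .
qed

lemma A11: fixes m M :: int shows "even (M - m) \<Longrightarrow> even (m + M)" by presburger

lemma fmap_int: "cell n a b \<Longrightarrow> a + b < n + 1 \<Longrightarrow> fmap n M \<pi> a b = (\<pi> a b + M) div 2"
  by (simp add: fmap_def)
lemma fmap_bnd: "cell n a b \<Longrightarrow> a + b = n + 1 \<Longrightarrow> fmap n M \<pi> a b = \<pi> a b + (M - mval \<pi> a b) div 2"
  by (simp add: fmap_def)
lemma fmap_out: "\<not> cell n a b \<Longrightarrow> fmap n M \<pi> a b = 0"
  by (simp add: fmap_def)
lemma finv_int: "cell n a b \<Longrightarrow> a + b < n + 1 \<Longrightarrow> finv n M \<pi> a b = 2 * \<pi> a b - M"
  by (simp add: finv_def)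
lemma finv_bnd: "cell n a b \<Longrightarrow> a + b = n + 1 \<Longrightarrow> finv n M \<pi> a b = \<pi> a b - M + mval \<pi> a b"
  by (simp add: finv_def)
lemma finv_out: "\<not> cell n a b \<Longrightarrow> finv n M \<pi> a b = 0"
  by (simp add: finv_def)

lemma mval_fmap: "2 \<le> n \<Longrightarrow> cell n a b \<Longrightarrow> a + b = n + 1 \<Longrightarrow>
    mval (fmap n M \<pi>) a b = (mval \<pi> a b + M) div 2"
  by (rule mval_map[where g="\<lambda>x. (x + M) div 2"]) (auto simp: mono_def zdiv_mono1 fmap_int)

lemma mval_finv: "2 \<le> n \<Longrightarrow> cell n a b \<Longrightarrow> a + b = n + 1 \<Longrightarrow>
    mval (finv n M \<pi>) a b = 2 * mval \<pi> a b - M"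
  by (rule mval_map[where g="\<lambda>x. 2 * x - M"]) (auto simp: mono_def finv_int)

lemma bnd_or_int: "cell n a b \<Longrightarrow> \<not> a + b < n + 1 \<Longrightarrow> a + b = n + 1"
  by (auto simp: cell_def)

lemma finv_fmap:
  assumes n: "2 \<le> n" and P: "\<pi> \<in> pstairPP n M"
  shows "finv n M (fmap n M \<pi>) = \<pi>"
proof (intro ext)
  fix a b
  have S: "\<pi> \<in> stairPP n M" using pstairD(1)[OF P] .
  show "finv n M (fmap n M \<pi>) a b = \<pi> a b"
  proof (cases "cell n a b")
    case False then show ?thesis using finv_out stairD(1)[OF S] by simp
  next
    case c: True
    show ?thesis
    proof (cases "a + b < n + 1")
      case True
      have "even (\<pi> a b + M)" using parity[OF n P c] True by simp
      then show ?thesis unfolding finv_int[OF c True] fmap_int[OF c True] by (rule A4)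
    next
      case False
      have b: "a + b = n + 1" using bnd_or_int[OF c False] .
      have e: "even (M - mval \<pi> a b)" using parity[OF n P c] False by simp
      show ?thesis unfolding finv_bnd[OF c b] fmap_bnd[OF c b] mval_fmap[OF n c b]
        by (rule A5[OF e A11[OF e]])
    qed
  qed
qed

lemma QD:
  assumes "\<pi> \<in> QTCPP n M"
  shows "\<pi> \<in> stairPP n M"
    "i + j = n + 1 \<Longrightarrow> 2 \<le> i \<Longrightarrow> i \<le> n \<Longrightarrow> 1 \<le> j \<Longrightarrow> \<pi> i j \<ge> M - \<pi> (i-1) j"
    "i + j = n + 1 \<Longrightarrow> 2 \<le> j \<Longrightarrow> j \<le> n \<Longrightarrow> 1 \<le> i \<Longrightarrow> \<pi> i j \<ge> M - \<pi> i (j-1)"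
  using assms unfolding QTCPP_def mem_Collect_eq by blast+

lemma fmap_finv:
  assumes n: "2 \<le> n" and Q: "\<pi> \<in> QTCPP n M"
  shows "fmap n M (finv n M \<pi>) = \<pi>"
proof (intro ext)
  fix a b
  have S: "\<pi> \<in> stairPP n M" using QD(1)[OF Q] .
  show "fmap n M (finv n M \<pi>) a b = \<pi> a b"
  proof (cases "cell n a b")
    case False then show ?thesis using fmap_out stairD(1)[OF S] by simp
  next
    case c: True
    show ?thesis
    proof (cases "a + b < n + 1")
      case True
      show ?thesis unfolding finv_int[OF c True] fmap_int[OF c True] by (rule A6)
    next
      case False
      have b: "a + b = n + 1" using bnd_or_int[OF c False] .
      show ?thesis unfolding finv_bnd[OF c b] fmap_bnd[OF c b] mval_finv[OF n c b]
        by (rule A7)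
    qed
  qed
qed

lemma half:
  assumes n: "2 \<le> n" and Q: "\<pi> \<in> QTCPP n M" and c: "cell n a b" and i: "a + b < n + 1"
  shows "M \<le> 2 * \<pi> a b"
proof -
  have S: "\<pi> \<in> stairPP n M" using QD(1)[OF Q] .
  define k where "k = n + 1 - a"
  have k: "a + k = n + 1" "2 \<le> k" "k \<le> n" "1 \<le> a" "b < k" "1 \<le> b"
    using c i unfolding k_def cell_def by auto
  have c1: "cell n a k" "cell n a (k-1)" using k by (auto simp: cell_def)
  have q: "\<pi> a k \<ge> M - \<pi> a (k-1)" using QD(3)[OF Q k(1,2,3,4)] .
  have r1: "\<pi> a k \<le> \<pi> a b" using row_mono[OF S _ c1(1)] k by simp
  have r2: "\<pi> a (k-1) \<le> \<pi> a b" using row_mono[OF S _ c1(2)] k by simp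
  show ?thesis using q r1 r2 by linarith
qed

lemma finv_in:
  assumes n: "2 \<le> n" and Q: "\<pi> \<in> QTCPP n M"
  shows "finv n M \<pi> \<in> pstairPP n M"
proof -
  define \<tau> where "\<tau> = finv n M \<pi>"
  have S: "\<pi> \<in> stairPP n M" using QD(1)[OF Q] .
  note rs = stairD(3)[OF S] and cs = stairD(4)[OF S]
  have "\<tau> \<in> pstairPP n M"
    unfolding pstairPP_def stairPP_def mem_Collect_eq
  proof (intro conjI allI impI)
    fix a b assume "\<not> cell n a b" then show "\<tau> a b = 0" unfolding \<tau>_def by (rule finv_out)
  next
    fix a b assume c: "cell n a b"
    show "0 \<le> \<tau> a b"
    proof (cases "a + b < n + 1")
      case True then show ?thesis unfolding \<tau>_def finv_int[OF c True] using half[OF n Q c True] by simp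
    next
      case False
      have b: "a + b = n + 1" using bnd_or_int[OF c False] .
      from mval_nb[OF n c b, of \<pi>] have "M - \<pi> a b \<le> mval \<pi> a b"
      proof
        assume h: "2 \<le> a \<and> cell n (a - 1) b \<and> a - 1 + b < n + 1 \<and> mval \<pi> a b = \<pi> (a - 1) b"
        have "\<pi> a b \<ge> M - \<pi> (a-1) b" using QD(2)[OF Q b] h c by (auto simp: cell_def)
        then show ?thesis using h by simp
      next
        assume h: "2 \<le> b \<and> cell n a (b - 1) \<and> a + (b - 1) < n + 1 \<and> mval \<pi> a b = \<pi> a (b - 1)"
        have "\<pi> a b \<ge> M - \<pi> a (b-1)" using QD(3)[OF Q b] h c by (auto simp: cell_def)
        then show ?thesis using h by simp
      qed
      then show ?thesis unfolding \<tau>_def finv_bnd[OF c b] by simp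
    qed
  next
    fix a b assume h: "cell n a b \<and> cell n a (b + 1)"
    then have c: "cell n a b" "cell n a (b+1)" by auto
    have i: "a + b < n + 1" using h by (auto simp: cell_def)
    have r: "\<pi> a (b+1) \<le> \<pi> a b" using rs c by auto
    show "\<tau> a (b + 1) \<le> \<tau> a b"
    proof (cases "a + (b+1) < n + 1")
      case True then show ?thesis unfolding \<tau>_def finv_int[OF c(2) True] finv_int[OF c(1) i] using r by simp
    next
      case False
      then have b: "a + (b+1) = n+1" using h by (auto simp: cell_def)
      have "2 \<le> b + 1" using h by (auto simp: cell_def)
      from mval_le2[OF n c(2) b this, of \<pi>]
      have "mval \<pi> a (b+1) \<le> \<pi> a b" by simp
      then show ?thesis unfolding \<tau>_def finv_bnd[OF c(2) b] finv_int[OF c(1) i] using r by simp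
    qed
  next
    fix a b assume h: "cell n a b \<and> cell n (a + 1) b"
    then have c: "cell n a b" "cell n (a+1) b" by auto
    have i: "a + b < n + 1" using h by (auto simp: cell_def)
    have r: "\<pi> (a+1) b \<le> \<pi> a b" using cs c by auto
    show "\<tau> (a + 1) b \<le> \<tau> a b"
    proof (cases "(a+1) + b < n + 1")
      case True then show ?thesis unfolding \<tau>_def finv_int[OF c(2) True] finv_int[OF c(1) i] using r by simp
    next
      case False
      then have b: "(a+1) + b = n+1" using h by (auto simp: cell_def)
      have "2 \<le> a + 1" using h by (auto simp: cell_def)
      from mval_le1[OF n c(2) b this, of \<pi>]
      have "mval \<pi> (a+1) b \<le> \<pi> a b" by simp
      then show ?thesis unfolding \<tau>_def finv_bnd[OF c(2) b] finv_int[OF c(1) i] using r by simp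
    qed
  next
    have c: "cell n 1 1" "1 + 1 < n + 1" using n by (auto simp: cell_def)
    show "\<tau> 1 1 \<le> M" unfolding \<tau>_def finv_int[OF c] using stairD(5)[OF S] by simp
  next
    fix a b assume h: "cell n a b \<and> a + b < n + 1"
    show "\<tau> a b mod 2 = M mod 2" unfolding \<tau>_def finv_int[OF conjunct1[OF h] conjunct2[OF h]]
      by (rule A8)
  qed
  then show ?thesis unfolding \<tau>_def .
qed

theorem mainTheorem2:
  fixes n :: nat and M :: int
  assumes "0 < n" and "0 \<le> M"
  shows "(n = 1 \<longrightarrow> pstairPP n M = QTCPP n M) \<and>
         (2 \<le> n \<longrightarrow>
            (\<forall>\<pi>\<in>pstairPP n M. \<forall>i j. cell n i j \<longrightarrow>
                 (if i + j < n + 1 then even (\<pi> i j + M) else even (M - mval \<pi> i j))) \<and>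
            bij_betw (fmap n M) (pstairPP n M) (QTCPP n M) \<and>
            (\<forall>\<pi>\<in>pstairPP n M. finv n M (fmap n M \<pi>) = \<pi>) \<and>
            (\<forall>\<pi>'\<in>QTCPP n M. finv n M \<pi>' \<in> pstairPP n M \<and> fmap n M (finv n M \<pi>') = \<pi>'))"
proof (intro conjI impI)
  assume "n = 1" then show "pstairPP n M = QTCPP n M" using case_n1 by simp
next
  assume n: "2 \<le> n"
  show "\<forall>\<pi>\<in>pstairPP n M. \<forall>i j. cell n i j \<longrightarrow>
                 (if i + j < n + 1 then even (\<pi> i j + M) else even (M - mval \<pi> i j))"
    using parity[OF n] by blast
  show "\<forall>\<pi>\<in>pstairPP n M. finv n M (fmap n M \<pi>) = \<pi>" using finv_fmap[OF n] by blast
  show "\<forall>\<pi>'\<in>QTCPP n M. finv n M \<pi>' \<in> pstairPP n M \<and> fmap n M (finv n M \<pi>') = \<pi>'"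
    using finv_in[OF n] fmap_finv[OF n] by blast
  show "bij_betw (fmap n M) (pstairPP n M) (QTCPP n M)"
    by (rule bij_betw_byWitness[where f'="finv n M"])
      (use finv_fmap[OF n] fmap_finv[OF n] fmap_in[OF n assms(2)] finv_in[OF n] in auto)
qed

end
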